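(* Let $f:M'\twoheadleftarrow M$ be a matroid quotient on a ground set $E$ with $n_f(E)=c$, and let $M'=M_0\overset{\mathcal K_1}{\twoheadleftarrow}M_1\overset{\mathcal K_2}{\twoheadleftarrow}\cdots\overset{\mathcal K_c}{\twoheadleftarrow}M_c=M$ be its Higgs factorization. Then for each $i=1,\dots,c$, \[\mathcal K_i=\{G\in\mathscr L_{M_i} : G\supseteq F \text{ for some } F\in\operatorname{cyc}(f) \text{ with } n_f(F)\ge i\}.\] In particular, the quotient $f$ (i.e. the matroid $M'$) is determined by $M$, the set $\operatorname{cyc}(f)$ of $f$-cyclic flats, and their $f$-nullities.
   Context: $M'$ is a (matroid) quotient of $M$, written $f:M'\twoheadleftarrow M$, if every flat of $M'$ is a flat of $M$. The $f$-nullity of $A\subseteq E$ is $n_f(A)=\operatorname{rk}_M(A)-\operatorname{rk}_{M'}(A)$. An $f$-cyclic flat is a flat $F$ of $M'$ that is minimal under inclusion among flats $F'$ of $M'$ with $n_f(F')=n_f(F)$; $\operatorname{cyc}(f)$ is the set of these. A modular cut $\mathcal K$ of a matroid $N$ is a nonempty upward-closed set of flats such that $F_1,F_2\in\mathcal K$ with $\operatorname{rk}(F_1)+\operatorname{rk}(F_2)=\operatorname{rk}(F_1\cup F_2)+\operatorname{rk}(F_1\cap F_2)$ implies $F_1\cap F_2\in\mathcal K$; it defines an elementary quotient $N'\overset{\mathcal K}{\twoheadleftarrow}N$ whose flats are $\mathcal K$ together with the flats of $N$ not covered by an element of $\mathcal K$. The Higgs factorization of $f$ is the sequence of elementary quotients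 in which $M_i$ ($1\le i\le c$) has bases $\{A\subseteq E: A \text{ spanning in } M',\ \text{independent in } M,\ |A|=\operatorname{rk}(M')+i\}$, and $\mathcal K_i$ is the modular cut of $M_i$ defining the elementary quotient $M_{i-1}$ of $M_i$. *)

theory Defs
  imports Main
begin

definition matroid :: "'a set \<Rightarrow> ('a set \<Rightarrow> bool) \<Rightarrow> bool" where
  "matroid E indep \<longleftrightarrow>
     finite E \<and> indep {} \<and> (\<forall>X. indep X \<longrightarrow> X \<subseteq> E) \<and>
     (\<forall>X Y. indep Y \<and> X \<subseteq> Y \<longrightarrow> indep X) \<and>
     (\<forall>X Y. indep X \<and> indep Y \<and> card X < card Y \<longrightarrow> (\<exists>y\<in>Y - X. indep (insert y X)))"

definition rk :: "('a set \<Rightarrow> bool) \<Rightarrow> 'a set \<Rightarrow> nat" where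
  "rk indep A = Max (card ` {X. X \<subseteq> A \<and> indep X})"

definition flat :: "'a set \<Rightarrow> ('a set \<Rightarrow> bool) \<Rightarrow> 'a set \<Rightarrow> bool" where
  "flat E indep F \<longleftrightarrow> F \<subseteq> E \<and> (\<forall>x\<in>E - F. rk indep (insert x F) > rk indep F)"

definition flats :: "'a set \<Rightarrow> ('a set \<Rightarrow> bool) \<Rightarrow> 'a set set" where
  "flats E indep = {F. flat E indep F}"

definition spanning :: "'a set \<Rightarrow> ('a set \<Rightarrow> bool) \<Rightarrow> 'a set \<Rightarrow> bool" where
  "spanning E indep A \<longleftrightarrow> A \<subseteq> E \<and> rk indep A = rk indep E"

definition quotient :: "'a set \<Rightarrow> ('a set \<Rightarrow> bool) \<Rightarrow> ('a set \<Rightarrow> bool) \<Rightarrow> bool" where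
  "quotient E M' M \<longleftrightarrow> matroid E M \<and> matroid E M' \<and> flats E M' \<subseteq> flats E M"

definition nullity :: "('a set \<Rightarrow> bool) \<Rightarrow> ('a set \<Rightarrow> bool) \<Rightarrow> 'a set \<Rightarrow> int" where
  "nullity M' M A = int (rk M A) - int (rk M' A)"

definition f_cyclic :: "'a set \<Rightarrow> ('a set \<Rightarrow> bool) \<Rightarrow> ('a set \<Rightarrow> bool) \<Rightarrow> 'a set \<Rightarrow> bool" where
  "f_cyclic E M' M F \<longleftrightarrow> flat E M' F \<and>
     (\<forall>F'. flat E M' F' \<and> F' \<subseteq> F \<and> nullity M' M F' = nullity M' M F \<longrightarrow> F' = F)"

definition cyc :: "'a set \<Rightarrow> ('a set \<Rightarrow> bool) \<Rightarrow> ('a set \<Rightarrow> bool) \<Rightarrow> 'a set set" where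
  "cyc E M' M = {F. f_cyclic E M' M F}"

definition modular_cut :: "'a set \<Rightarrow> ('a set \<Rightarrow> bool) \<Rightarrow> 'a set set \<Rightarrow> bool" where
  "modular_cut E N K \<longleftrightarrow> K \<noteq> {} \<and> K \<subseteq> flats E N \<and>
     (\<forall>F\<in>K. \<forall>G. flat E N G \<and> F \<subseteq> G \<longrightarrow> G \<in> K) \<and>
     (\<forall>F1\<in>K. \<forall>F2\<in>K. rk N F1 + rk N F2 = rk N (F1 \<union> F2) + rk N (F1 \<inter> F2) \<longrightarrow> F1 \<inter> F2 \<in> K)"

definition covers :: "'a set \<Rightarrow> ('a set \<Rightarrow> bool) \<Rightarrow> 'a set \<Rightarrow> 'a set \<Rightarrow> bool" where
  "covers E N G F \<longleftrightarrow> flat E N F \<and> flat E N G \<and> F \<subset> G \<and>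
     \<not> (\<exists>H. flat E N H \<and> F \<subset> H \<and> H \<subset> G)"

definition elem_quotient_flats :: "'a set \<Rightarrow> ('a set \<Rightarrow> bool) \<Rightarrow> 'a set set \<Rightarrow> 'a set set" where
  "elem_quotient_flats E N K = K \<union> {F \<in> flats E N. \<not> (\<exists>G\<in>K. covers E N G F)}"

definition higgs :: "'a set \<Rightarrow> ('a set \<Rightarrow> bool) \<Rightarrow> ('a set \<Rightarrow> bool) \<Rightarrow> nat \<Rightarrow> 'a set \<Rightarrow> bool" where
  "higgs E M' M i X = (if i = 0 then M' X else
     (\<exists>B. X \<subseteq> B \<and> spanning E M' B \<and> M B \<and> card B = rk M' E + i))"

end

theory Submission
  imports Defs
begin
locale matr = fixes E :: "'a set" and ind :: "'a set \<Rightarrow> bool"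
  assumes mat: "matroid E ind"
begin

abbreviation r where "r \<equiv> rk ind"

lemma finE: "finite E" using mat unfolding matroid_def by blast
lemma ind_empty: "ind {}" using mat unfolding matroid_def by blast
lemma ind_E: "ind X \<Longrightarrow> X \<subseteq> E" using mat unfolding matroid_def by blast
lemma ind_sub: "ind Y \<Longrightarrow> X \<subseteq> Y \<Longrightarrow> ind X" using mat unfolding matroid_def by blast
lemma ind_aug: "ind X \<Longrightarrow> ind Y \<Longrightarrow> card X < card Y \<Longrightarrow> \<exists>y\<in>Y-X. ind (insert y X)"
  using mat unfolding matroid_def by blast
lemma ind_fin: "ind X \<Longrightarrow> finite X" using finE ind_E finite_subset by blast

lemma fin_set: "finite {X. X \<subseteq> A \<and> ind X}"
proof -
  have "{X. X \<subseteq> A \<and> ind X} \<subseteq> Pow E" using ind_E by blast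
  thus ?thesis using finE by (meson finite_Pow_iff finite_subset)
qed

lemma rk_ex: "\<exists>X. X \<subseteq> A \<and> ind X \<and> card X = r A"
proof -
  have ne: "card ` {X. X \<subseteq> A \<and> ind X} \<noteq> {}" using ind_empty by blast
  have "r A \<in> card ` {X. X \<subseteq> A \<and> ind X}" unfolding rk_def
    using Max_in[OF finite_imageI[OF fin_set] ne] .
  thus ?thesis by force
qed

lemma rk_ge: "X \<subseteq> A \<Longrightarrow> ind X \<Longrightarrow> card X \<le> r A"
  unfolding rk_def by (rule Max_ge) (use fin_set in auto)

lemma rk_ind: "ind X \<Longrightarrow> r X = card X"
proof -
  assume X: "ind X"
  obtain Y where Y: "Y \<subseteq> X" "ind Y" "card Y = r X" using rk_ex by blast
  have "card Y \<le> card X" using Y(1) ind_fin[OF X] by (rule card_mono[rotated])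
  moreover have "card X \<le> r X" using X by (intro rk_ge) auto
  ultimately show ?thesis using Y by linarith
qed

lemma rk_le_card: "finite A \<Longrightarrow> r A \<le> card A"
proof -
  assume A: "finite A"
  obtain Y where Y: "Y \<subseteq> A" "ind Y" "card Y = r A" using rk_ex by blast
  show ?thesis using card_mono[OF A Y(1)] Y(3) by simp
qed

lemma rk_mono: "A \<subseteq> B \<Longrightarrow> r A \<le> r B"
proof -
  assume AB: "A \<subseteq> B"
  obtain Y where Y: "Y \<subseteq> A" "ind Y" "card Y = r A" using rk_ex by blast
  have "Y \<subseteq> B" using Y AB by blast
  from rk_ge[OF this Y(2)] show ?thesis using Y(3) by simp
qed

lemma rk_ind_iff: "finite X \<Longrightarrow> r X = card X \<Longrightarrow> ind X"
proof -
  assume X: "finite X" "r X = card X"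
  obtain Y where Y: "Y \<subseteq> X" "ind Y" "card Y = r X" using rk_ex by blast
  have "Y = X" using card_subset_eq[OF X(1) Y(1)] Y(3) X(2) by simp
  thus ?thesis using Y by simp
qed

lemma rk_empty: "r {} = 0"
  using rk_ind[OF ind_empty] by simp

lemma rk_insert: "r (insert x A) \<le> Suc (r A)"
proof -
  obtain Y where Y: "Y \<subseteq> insert x A" "ind Y" "card Y = r (insert x A)" using rk_ex by blast
  have "Y - {x} \<subseteq> A" "ind (Y - {x})" using Y ind_sub by auto
  hence "card (Y - {x}) \<le> r A" using rk_ge by blast
  moreover have "card Y \<le> Suc (card (Y - {x}))"
    using ind_fin[OF Y(2)] by (cases "x \<in> Y") (auto simp: card_Diff_singleton_if)
  ultimately show ?thesis using Y by linarith
qed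

lemma extend: "ind I \<Longrightarrow> I \<subseteq> A \<Longrightarrow> \<exists>J. I \<subseteq> J \<and> J \<subseteq> A \<and> ind J \<and> card J = r A"
proof (induction "r A - card I" arbitrary: I rule: less_induct)
  case less
  show ?case
  proof (cases "card I < r A")
    case True
    obtain X where X: "X \<subseteq> A" "ind X" "card X = r A" using rk_ex by blast
    have "card I < card X" using True X by simp
    then obtain y where y: "y \<in> X - I" "ind (insert y I)" using ind_aug[OF less.prems(1) X(2)] by blast
    have "card (insert y I) = Suc (card I)" using y ind_fin[OF less.prems(1)] by simp
    hence lt: "r A - card (insert y I) < r A - card I" using True by simp
    have sub: "insert y I \<subseteq> A" using y X less.prems by blast
    from less.hyps[OF lt y(2) sub] obtain J where "insert y I \<subseteq> J \<and> J \<subseteq> A \<and> ind J \<and> card J = r A"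
      by blast
    thus ?thesis by blast
  next
    case False
    hence "card I = r A" using rk_ge[OF less.prems(2,1)] by simp
    thus ?thesis using less.prems by blast
  qed
qed

lemma submod: "r (A \<union> B) + r (A \<inter> B) \<le> r A + r B"
proof -
  obtain I where I: "I \<subseteq> A \<inter> B" "ind I" "card I = r (A \<inter> B)" using rk_ex by blast
  obtain J where J: "I \<subseteq> J" "J \<subseteq> A \<union> B" "ind J" "card J = r (A \<union> B)"
    using extend[OF I(2), of "A \<union> B"] I(1) by blast
  have fJ: "finite J" using J ind_fin by blast
  have "ind (J \<inter> A)" using ind_sub[OF J(3)] by simp
  hence a: "card (J \<inter> A) \<le> r A" by (intro rk_ge) auto
  have "ind (J \<inter> B)" using ind_sub[OF J(3)] by simp
  hence b: "card (J \<inter> B) \<le> r B" by (intro rk_ge) auto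
  have c: "card I \<le> card (J \<inter> A \<inter> B)" using I J fJ by (intro card_mono) auto
  have e1: "card (J \<inter> A) + card (J \<inter> B) = card (J \<inter> A \<union> J \<inter> B) + card (J \<inter> A \<inter> (J \<inter> B))"
    using fJ by (intro card_Un_Int) auto
  have e2: "J \<inter> A \<union> J \<inter> B = J" using J by auto
  have e3: "J \<inter> A \<inter> (J \<inter> B) = J \<inter> A \<inter> B" by auto
  have "card (J \<inter> A) + card (J \<inter> B) = card J + card (J \<inter> A \<inter> B)"
    using e1 unfolding e2 e3 .
  thus ?thesis using a b c I J by linarith
qed

lemma cl_union: "finite S \<Longrightarrow> \<forall>y\<in>S. r (insert y A) = r A \<Longrightarrow> r (A \<union> S) = r A"
proof (induction S rule: finite_induct)
  case empty thus ?case by simp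
next
  case (insert y S)
  have IH: "r (A \<union> S) = r A" using insert by auto
  have hy: "r (insert y A) = r A" using insert by auto
  have s: "r ((A \<union> S) \<union> insert y A) + r ((A \<union> S) \<inter> insert y A) \<le> r (A \<union> S) + r (insert y A)"
    by (rule submod)
  have m: "r A \<le> r ((A \<union> S) \<inter> insert y A)" by (rule rk_mono) auto
  have e: "(A \<union> S) \<union> insert y A = A \<union> insert y S" by auto
  have m2: "r A \<le> r (A \<union> insert y S)" by (rule rk_mono) auto
  from s have "r (A \<union> insert y S) + r ((A \<union> S) \<inter> insert y A) \<le> r (A \<union> S) + r (insert y A)"
    unfolding e .
  thus ?case using m m2 IH hy by linarith
qed

lemma rk_union_card: "finite S \<Longrightarrow> r (A \<union> S) \<le> r A + card S"
proof (induction S rule: finite_induct)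
  case empty thus ?case by simp
next
  case (insert y S)
  have "r (A \<union> insert y S) = r (insert y (A \<union> S))" by simp
  also have "\<dots> \<le> Suc (r (A \<union> S))" by (rule rk_insert)
  finally show ?case using insert by simp
qed

definition cl where "cl A = {y\<in>E. r (insert y A) = r A}"

lemma cl_sup: "A \<subseteq> E \<Longrightarrow> A \<subseteq> cl A"
  unfolding cl_def by (auto simp: insert_absorb)

lemma rk_cl: "A \<subseteq> E \<Longrightarrow> r (cl A) = r A"
proof -
  assume A: "A \<subseteq> E"
  have "finite (cl A)" using finE unfolding cl_def by auto
  hence "r (A \<union> cl A) = r A" by (rule cl_union) (auto simp: cl_def)
  moreover have "A \<union> cl A = cl A" using cl_sup[OF A] by auto
  ultimately show ?thesis by simp
qed

lemma flat_cl: "A \<subseteq> E \<Longrightarrow> flat E ind (cl A)"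
proof -
  assume A: "A \<subseteq> E"
  { fix x assume x: "x \<in> E - cl A"
    have le: "r (cl A) \<le> r (insert x (cl A))" by (rule rk_mono) auto
    moreover { assume "r (insert x (cl A)) = r (cl A)"
      moreover have "r (insert x A) \<le> r (insert x (cl A))" using cl_sup[OF A] by (intro rk_mono) auto
      moreover have "r A \<le> r (insert x A)" by (rule rk_mono) auto
      ultimately have "r (insert x A) = r A" using rk_cl[OF A] by linarith
      hence False using x unfolding cl_def by auto }
    hence ne: "r (insert x (cl A)) \<noteq> r (cl A)" by blast
    have "r (cl A) < r (insert x (cl A))" by (rule le_neq_implies_less[OF le]) (use ne in simp) }
  moreover have "cl A \<subseteq> E" unfolding cl_def by auto
  ultimately show ?thesis unfolding flat_def by blast
qed

lemma flat_closure:
  assumes F: "flat E ind F" and AF: "A \<subseteq> F" and x: "x \<in> E" and eq: "r (insert x A) = r A"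
  shows "x \<in> F"
proof (rule ccontr)
  assume nx: "x \<notin> F"
  have s: "r (F \<union> insert x A) + r (F \<inter> insert x A) \<le> r F + r (insert x A)" by (rule submod)
  have "F \<union> insert x A = insert x F" using AF by auto
  moreover have "F \<inter> insert x A = A" using AF nx by auto
  ultimately have "r (insert x F) \<le> r F" using s eq by simp
  moreover have "r F < r (insert x F)" using F nx x unfolding flat_def by auto
  ultimately show False by simp
qed

lemma cl_min: "flat E ind H \<Longrightarrow> A \<subseteq> H \<Longrightarrow> cl A \<subseteq> H"
  using flat_closure unfolding cl_def by blast

lemma flat_sub: "flat E ind F \<Longrightarrow> F \<subseteq> E" unfolding flat_def by blast

lemma flat_inter: "flat E ind F1 \<Longrightarrow> flat E ind F2 \<Longrightarrow> flat E ind (F1 \<inter> F2)"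
proof -
  assume F1: "flat E ind F1" and F2: "flat E ind F2"
  { fix x assume x: "x \<in> E - (F1 \<inter> F2)"
    have le: "r (F1 \<inter> F2) \<le> r (insert x (F1 \<inter> F2))" by (rule rk_mono) auto
    { assume "r (insert x (F1 \<inter> F2)) = r (F1 \<inter> F2)"
      moreover have "F1 \<inter> F2 \<subseteq> F1" "F1 \<inter> F2 \<subseteq> F2" by auto
      ultimately have False using flat_closure[OF F1] flat_closure[OF F2] x by blast }
    hence ne: "r (insert x (F1 \<inter> F2)) \<noteq> r (F1 \<inter> F2)" by blast
    have "r (F1 \<inter> F2) < r (insert x (F1 \<inter> F2))" by (rule le_neq_implies_less[OF le]) (use ne in simp) }
  thus ?thesis using flat_sub[OF F1] unfolding flat_def by blast
qed

lemma flat_E: "flat E ind E" unfolding flat_def by blast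

lemma flat_rk_less: "flat E ind G \<Longrightarrow> flat E ind H \<Longrightarrow> G \<subset> H \<Longrightarrow> r G < r H"
proof -
  assume G: "flat E ind G" and H: "flat E ind H" and GH: "G \<subset> H"
  then obtain x where x: "x \<in> H" "x \<notin> G" by blast
  have "x \<in> E" using x H flat_sub by blast
  hence "r G < r (insert x G)" using G x unfolding flat_def by blast
  also have "\<dots> \<le> r H" using x GH by (intro rk_mono) auto
  finally show ?thesis .
qed

lemma ind_iff_flats: "ind X \<longleftrightarrow> X \<subseteq> E \<and> (\<forall>x\<in>X. \<exists>F. flat E ind F \<and> X - {x} \<subseteq> F \<and> x \<notin> F)"
proof
  assume X: "ind X"
  have XE: "X \<subseteq> E" using X ind_E by blast
  { fix x assume x: "x \<in> X"
    have "x \<notin> cl (X - {x})"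
    proof
      assume "x \<in> cl (X - {x})"
      hence "r (insert x (X - {x})) = r (X - {x})" unfolding cl_def by blast
      moreover have "insert x (X - {x}) = X" using x by auto
      moreover have "r (X - {x}) = card (X - {x})" using X ind_sub rk_ind by (meson Diff_subset)
      moreover have "r X = card X" using rk_ind[OF X] .
      moreover have "card (X - {x}) < card X" using x ind_fin[OF X] by (rule card_Diff1_less[rotated])
      ultimately show False by simp
    qed
    moreover have "X - {x} \<subseteq> E" using XE by blast
    ultimately have "\<exists>F. flat E ind F \<and> X - {x} \<subseteq> F \<and> x \<notin> F"
      using flat_cl cl_sup by blast
  }
  thus "X \<subseteq> E \<and> (\<forall>x\<in>X. \<exists>F. flat E ind F \<and> X - {x} \<subseteq> F \<and> x \<notin> F)" using XE by blast
next
  assume H: "X \<subseteq> E \<and> (\<forall>x\<in>X. \<exists>F. flat E ind F \<and> X - {x} \<subseteq> F \<and> x \<notin> F)"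
  have fX: "finite X" using H finE finite_subset by blast
  show "ind X"
  proof (rule ccontr)
    assume nX: "\<not> ind X"
    obtain I where I: "I \<subseteq> X" "ind I" "card I = r X" using rk_ex by blast
    have "I \<noteq> X" using I nX by blast
    then obtain x where x: "x \<in> X" "x \<notin> I" using I by blast
    have "card I \<le> r (X - {x})" using I x by (intro rk_ge) auto
    moreover have "r (X - {x}) \<le> r X" by (rule rk_mono) auto
    ultimately have eq: "r (insert x (X - {x})) = r (X - {x})" using I x by (simp add: insert_absorb)
    obtain F where F: "flat E ind F" "X - {x} \<subseteq> F" "x \<notin> F" using H x by blast
    have "x \<in> F" using flat_closure[OF F(1,2) _ eq] H x by blast
    thus False using F by blast
  qed
qed

end

lemma flats_eq_matroid:
  assumes "matroid E A" "matroid E B" "flats E A = flats E B"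
  shows "A = B"
proof
  fix X
  interpret a: matr E A by unfold_locales (rule assms(1))
  interpret b: matr E B by unfold_locales (rule assms(2))
  have "\<And>F. flat E A F = flat E B F" using assms(3) unfolding flats_def by blast
  thus "A X = B X" using a.ind_iff_flats[of X] b.ind_iff_flats[of X] by simp
qed

lemma ext_card:
  assumes "finite J" "I \<subseteq> J" "card I \<le> k" "k \<le> card J"
  shows "\<exists>X. I \<subseteq> X \<and> X \<subseteq> J \<and> card X = k"
proof -
  have fI: "finite I" using assms(1,2) finite_subset by blast
  have "card (J - I) = card J - card I" using assms(1,2) fI by (simp add: card_Diff_subset)
  hence "k - card I \<le> card (J - I)" using assms(4) by simp
  then obtain T where T: "T \<subseteq> J - I" "card T = k - card I" "finite T"
    by (rule obtain_subset_with_card_n)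
  have "card (I \<union> T) = card I + card T" using T fI by (intro card_Un_disjoint) auto
  hence "card (I \<union> T) = k" using T assms(3) by simp
  thus ?thesis using T assms(2) by (intro exI[of _ "I \<union> T"]) auto
qed

locale quot = fixes E :: "'a set" and M' M :: "'a set \<Rightarrow> bool"
  assumes q: "quotient E M' M"
begin

sublocale N: matr E M using q unfolding quotient_def by unfold_locales blast
sublocale N': matr E M' using q unfolding quotient_def by unfold_locales blast

abbreviation nu where "nu \<equiv> nullity M' M"

lemma q_flats: "flat E M' F \<Longrightarrow> flat E M F"
  using q unfolding quotient_def flats_def by blast

lemma q_step:
  assumes A: "A \<subseteq> E" and x: "x \<in> E" and eq: "rk M (insert x A) = rk M A"
  shows "rk M' (insert x A) = rk M' A"
proof (rule ccontr)
  assume ne: "rk M' (insert x A) \<noteq> rk M' A"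
  have nx: "x \<notin> N'.cl A" unfolding N'.cl_def using ne by blast
  have "flat E M (N'.cl A)" using q_flats N'.flat_cl A by blast
  from N.flat_closure[OF this N'.cl_sup[OF A] x eq] nx show False by blast
qed

lemma null_ins:
  assumes A: "A \<subseteq> E" and x: "x \<in> E"
  shows "nu A \<le> nu (insert x A)"
proof (cases "rk M (insert x A) = rk M A")
  case True
  thus ?thesis using q_step[OF A x True] by (simp add: nullity_def)
next
  case False
  have "rk M A \<le> rk M (insert x A)" by (rule N.rk_mono) auto
  hence "rk M (insert x A) = Suc (rk M A)" using False N.rk_insert[of x A] by linarith
  moreover have "rk M' (insert x A) \<le> Suc (rk M' A)" by (rule N'.rk_insert)
  ultimately show ?thesis by (simp add: nullity_def)
qed

lemma null_mono_aux: "finite S \<Longrightarrow> A \<subseteq> E \<Longrightarrow> S \<subseteq> E \<Longrightarrow> nu A \<le> nu (A \<union> S)"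
proof (induction S rule: finite_induct)
  case empty thus ?case by simp
next
  case (insert y S)
  have "nu A \<le> nu (A \<union> S)" using insert by simp
  also have "\<dots> \<le> nu (insert y (A \<union> S))" using insert by (intro null_ins) auto
  finally show ?case by simp
qed

lemma null_mono: "B \<subseteq> E \<Longrightarrow> A \<subseteq> B \<Longrightarrow> nu A \<le> nu B"
proof -
  assume B: "B \<subseteq> E" and AB: "A \<subseteq> B"
  have "finite (B - A)" using B N.finE finite_subset by blast
  hence "nu A \<le> nu (A \<union> (B - A))" using B AB by (intro null_mono_aux) auto
  moreover have "A \<union> (B - A) = B" using AB by auto
  ultimately show ?thesis by simp
qed

lemma null_empty: "nu {} = 0"
  using N.rk_empty N'.rk_empty by (simp add: nullity_def)

lemma null_nonneg: "A \<subseteq> E \<Longrightarrow> 0 \<le> nu A"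
  using null_mono[of A "{}"] null_empty by simp

lemma rk'_le: "A \<subseteq> E \<Longrightarrow> rk M' A \<le> rk M A"
  using null_nonneg[of A] by (simp add: nullity_def)

lemma ind'_ind: "M' X \<Longrightarrow> M X"
proof -
  assume X: "M' X"
  have XE: "X \<subseteq> E" using N'.ind_E[OF X] .
  have fX: "finite X" using N'.ind_fin[OF X] .
  have "card X \<le> rk M X" using rk'_le[OF XE] N'.rk_ind[OF X] by simp
  moreover have "rk M X \<le> card X" using N.rk_le_card[OF fX] .
  ultimately show "M X" using N.rk_ind_iff[OF fX] by simp
qed

lemma null_ind: "M X \<Longrightarrow> nu X = int (card X) - int (rk M' X)"
  using N.rk_ind by (simp add: nullity_def)

definition hi :: "nat \<Rightarrow> 'a set \<Rightarrow> bool" where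
  "hi i X \<longleftrightarrow> M X \<and> card X \<le> rk M' X + i"

lemma hi_matroid: "matroid E (hi i)"
  unfolding matroid_def
proof (intro conjI allI impI)
  show "finite E" by (rule N.finE)
  show "hi i {}" unfolding hi_def using N.ind_empty by simp
  fix X assume "hi i X" thus "X \<subseteq> E" unfolding hi_def using N.ind_E by blast
next
  fix X Y assume h: "hi i Y \<and> X \<subseteq> Y"
  hence MY: "M Y" and XY: "X \<subseteq> Y" and cY: "card Y \<le> rk M' Y + i" unfolding hi_def by auto
  have MX: "M X" using N.ind_sub[OF MY XY] .
  have "nu X \<le> nu Y" using null_mono N.ind_E[OF MY] XY by blast
  hence "int (card X) - int (rk M' X) \<le> int (card Y) - int (rk M' Y)"
    using null_ind[OF MX] null_ind[OF MY] by simp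
  hence "card X \<le> rk M' X + i" using cY by linarith
  thus "hi i X" using MX unfolding hi_def by blast
next
  fix X Y assume h: "hi i X \<and> hi i Y \<and> card X < card Y"
  hence MX: "M X" and MY: "M Y" and cX: "card X \<le> rk M' X + i" and cY: "card Y \<le> rk M' Y + i"
    and lt: "card X < card Y" unfolding hi_def by auto
  have fX: "finite X" using N.ind_fin[OF MX] .
  have XE: "X \<subseteq> E" using N.ind_E[OF MX] .
  show "\<exists>y\<in>Y - X. hi i (insert y X)"
  proof (cases "card X < rk M' X + i")
    case True
    obtain y where y: "y \<in> Y - X" "M (insert y X)" using N.ind_aug[OF MX MY lt] by blast
    have "card (insert y X) = Suc (card X)" using y fX by simp
    moreover have "rk M' X \<le> rk M' (insert y X)" by (rule N'.rk_mono) auto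
    ultimately have "card (insert y X) \<le> rk M' (insert y X) + i" using True by linarith
    thus ?thesis using y unfolding hi_def by blast
  next
    case False
    hence eqX: "card X = rk M' X + i" using cX by linarith
    obtain I' where I': "I' \<subseteq> X" "M' I'" "card I' = rk M' X" using N'.rk_ex by blast
    obtain J' where J': "J' \<subseteq> Y" "M' J'" "card J' = rk M' Y" using N'.rk_ex by blast
    have "card I' < card J'" using I' J' eqX cY lt by linarith
    then obtain y where y: "y \<in> J' - I'" "M' (insert y I')" using N'.ind_aug[OF I'(2) J'(2)] by blast
    have fI: "finite I'" using N'.ind_fin[OF I'(2)] .
    have cI: "card (insert y I') = Suc (card I')" using y fI by simp
    have yX: "y \<notin> X"
    proof
      assume "y \<in> X"
      hence "insert y I' \<subseteq> X" using I' by blast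
      from N'.rk_ge[OF this y(2)] show False using cI I' by simp
    qed
    have yE: "y \<in> E" using y J' N.ind_E[OF MY] by blast
    have "insert y I' \<subseteq> insert y X" using I' by blast
    from N'.rk_ge[OF this y(2)] have g: "Suc (rk M' X) \<le> rk M' (insert y X)" using cI I' by simp
    hence "rk M' (insert y X) \<noteq> rk M' X" by simp
    hence ne: "rk M (insert y X) \<noteq> rk M X" using q_step[OF XE yE] by blast
    have "rk M X \<le> rk M (insert y X)" by (rule N.rk_mono) auto
    hence "rk M (insert y X) = Suc (rk M X)" using ne N.rk_insert[of y X] by linarith
    moreover have cyX: "card (insert y X) = Suc (card X)" using yX fX by simp
    ultimately have "rk M (insert y X) = card (insert y X)" using N.rk_ind[OF MX] by simp
    hence "M (insert y X)" using N.rk_ind_iff fX by simp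
    moreover have "card (insert y X) \<le> rk M' (insert y X) + i" using cyX eqX g by linarith
    moreover have "y \<in> Y - X" using y J' yX by blast
    ultimately show ?thesis unfolding hi_def by blast
  qed
qed

lemma rk_hi:
  assumes A: "A \<subseteq> E"
  shows "rk (hi i) A = min (rk M A) (rk M' A + i)"
proof -
  interpret H: matr E "hi i" by unfold_locales (rule hi_matroid)
  obtain X where X: "X \<subseteq> A" "hi i X" "card X = rk (hi i) A" using H.rk_ex by blast
  have MX: "M X" using X unfolding hi_def by blast
  have "card X \<le> rk M A" using N.rk_ge[OF X(1) MX] .
  moreover have "card X \<le> rk M' A + i"
    using X N'.rk_mono[OF X(1)] unfolding hi_def by linarith
  ultimately have le: "rk (hi i) A \<le> min (rk M A) (rk M' A + i)" using X by simp
  obtain I' where I': "I' \<subseteq> A" "M' I'" "card I' = rk M' A" using N'.rk_ex by blast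
  have MI: "M I'" using ind'_ind[OF I'(2)] .
  obtain J where J: "I' \<subseteq> J" "J \<subseteq> A" "M J" "card J = rk M A" using N.extend[OF MI I'(1)] by blast
  have fJ: "finite J" using N.ind_fin[OF J(3)] .
  have "rk M' A \<le> rk M A" using rk'_le[OF A] .
  hence "card I' \<le> min (rk M A) (rk M' A + i)" "min (rk M A) (rk M' A + i) \<le> card J"
    using I' J by auto
  then obtain Y where Y: "I' \<subseteq> Y" "Y \<subseteq> J" "card Y = min (rk M A) (rk M' A + i)"
    using ext_card[OF fJ J(1)] by blast
  have MY: "M Y" using N.ind_sub[OF J(3) Y(2)] .
  have "card I' \<le> rk M' Y" using N'.rk_ge[OF Y(1) I'(2)] .
  hence "card Y \<le> rk M' Y + i" using Y I' by linarith
  hence "hi i Y" using MY unfolding hi_def by blast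
  moreover have "Y \<subseteq> A" using Y J by blast
  ultimately have "card Y \<le> rk (hi i) A" using H.rk_ge by blast
  thus ?thesis using le Y by linarith
qed

lemma higgs_hi:
  assumes ic: "int i \<le> nu E"
  shows "higgs E M' M i = hi i"
proof
  fix X
  show "higgs E M' M i X = hi i X"
  proof (cases "i = 0")
    case True
    have "M' X \<longleftrightarrow> M X \<and> card X \<le> rk M' X"
    proof
      assume "M' X" thus "M X \<and> card X \<le> rk M' X" using ind'_ind N'.rk_ind by simp
    next
      assume h: "M X \<and> card X \<le> rk M' X"
      have fX: "finite X" using N.ind_fin h by blast
      have "rk M' X \<le> card X" using N'.rk_le_card[OF fX] .
      thus "M' X" using N'.rk_ind_iff[OF fX] h by simp
    qed
    thus ?thesis using True unfolding higgs_def hi_def by simp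
  next
    case False
    have "(\<exists>B. X \<subseteq> B \<and> spanning E M' B \<and> M B \<and> card B = rk M' E + i) \<longleftrightarrow> hi i X"
    proof
      assume "\<exists>B. X \<subseteq> B \<and> spanning E M' B \<and> M B \<and> card B = rk M' E + i"
      then obtain B where B: "X \<subseteq> B" "B \<subseteq> E" "rk M' B = rk M' E" "M B" "card B = rk M' E + i"
        unfolding spanning_def by blast
      have MX: "M X" using N.ind_sub[OF B(4) B(1)] .
      have "nu X \<le> nu B" using null_mono B by blast
      hence "int (card X) - int (rk M' X) \<le> int (card B) - int (rk M' B)"
        using null_ind[OF MX] null_ind[OF B(4)] by simp
      hence "card X \<le> rk M' X + i" using B by linarith
      thus "hi i X" using MX unfolding hi_def by blast
    next
      assume h: "hi i X"
      hence MX: "M X" and cX: "card X \<le> rk M' X + i" unfolding hi_def by auto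
      have XE: "X \<subseteq> E" using N.ind_E[OF MX] .
      have fX: "finite X" using N.ind_fin[OF MX] .
      obtain I' where I': "I' \<subseteq> X" "M' I'" "card I' = rk M' X" using N'.rk_ex by blast
      have I'E: "I' \<subseteq> E" using I'(1) XE by (rule order_trans)
      obtain T where T: "I' \<subseteq> T" "T \<subseteq> E" "M' T" "card T = rk M' E"
        using N'.extend[OF I'(2) I'E] by blast
      have fT: "finite T" using N'.ind_fin[OF T(3)] .
      define W where "W = X \<union> T"
      have WE: "W \<subseteq> E" using XE T unfolding W_def by blast
      have a0: "rk M (X \<union> (T - X)) \<le> rk M X + card (T - X)"
        using fT by (intro N.rk_union_card) auto
      have eW: "X \<union> (T - X) = W" unfolding W_def by auto
      have a: "rk M W \<le> rk M X + card (T - X)" using a0 unfolding eW .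
      have b: "card (T - X) \<le> card (T - I')" using fT I' by (intro card_mono) auto
      have fI: "finite I'" using fT T(1) finite_subset by blast
      have c1: "card (T - I') = card T - card I'" using fI T(1) by (rule card_Diff_subset)
      have c2: "card I' \<le> card T" using fT T(1) by (rule card_mono)
      have c: "card (T - I') + card I' = card T" using c1 c2 by simp
      have rW: "rk M W + rk M' X \<le> card X + rk M' E"
        using a b c N.rk_ind[OF MX] I'(3) T(4) by linarith
      have XW: "X \<subseteq> W" unfolding W_def by blast
      obtain Z where Z: "X \<subseteq> Z" "Z \<subseteq> W" "M Z" "card Z = rk M W"
        using N.extend[OF MX XW] by blast
      have "nu Z \<le> nu W" by (rule null_mono[OF WE Z(2)])
      hence n1: "int (rk M Z) - int (rk M' Z) \<le> int (rk M W) - int (rk M' W)" unfolding nullity_def .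
      have "rk M Z = rk M W" using Z N.rk_ind[OF Z(3)] by simp
      hence "rk M' W \<le> rk M' Z" using n1 by linarith
      moreover have "rk M' T \<le> rk M' W" unfolding W_def by (rule N'.rk_mono) auto
      ultimately have rZ: "rk M' E \<le> rk M' Z" using N'.rk_ind[OF T(3)] T(4) by simp
      have cZ: "card Z \<le> rk M' E + i" using rW Z cX by linarith
      have ZE: "Z \<subseteq> E" using Z WE by blast
      obtain B' where B': "Z \<subseteq> B'" "B' \<subseteq> E" "M B'" "card B' = rk M E"
        using N.extend[OF Z(3) ZE] by blast
      have "int (rk M' E + i) \<le> int (rk M E)" using ic by (simp add: nullity_def)
      hence "rk M' E + i \<le> card B'" using B' by simp
      from ext_card[OF N.ind_fin[OF B'(3)] B'(1) cZ this]
      obtain B where B: "Z \<subseteq> B" "B \<subseteq> B'" "card B = rk M' E + i" by blast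
      have MB: "M B" using N.ind_sub[OF B'(3) B(2)] .
      have BE: "B \<subseteq> E" using B B' by blast
      have "rk M' Z \<le> rk M' B" using B by (intro N'.rk_mono) auto
      moreover have "rk M' B \<le> rk M' E" using BE by (rule N'.rk_mono)
      ultimately have "spanning E M' B" unfolding spanning_def using rZ BE by simp
      moreover have "X \<subseteq> B" using B(1) Z(1) by (rule order_trans[rotated])
      ultimately show "\<exists>B. X \<subseteq> B \<and> spanning E M' B \<and> M B \<and> card B = rk M' E + i"
        using B(3) MB by blast
    qed
    thus ?thesis using False unfolding higgs_def by simp
  qed
qed

end

lemma eqf_unique_aux:
  assumes fin: "finite E"
    and K1: "K1 \<subseteq> flats E N" and K2: "K2 \<subseteq> flats E N"
    and up2: "\<forall>F\<in>K2. \<forall>G. flat E N G \<and> F \<subseteq> G \<longrightarrow> G \<in> K2" and ne2: "K2 \<noteq> {}"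
    and up1: "\<forall>F\<in>K1. \<forall>G. flat E N G \<and> F \<subseteq> G \<longrightarrow> G \<in> K1"
    and eq: "elem_quotient_flats E N K1 = elem_quotient_flats E N K2"
  shows "K1 \<subseteq> K2"
proof
  fix G assume G1: "G \<in> K1"
  show "G \<in> K2"
  proof (rule ccontr)
    assume G2: "G \<notin> K2"
    have GF: "flat E N G" using G1 K1 unfolding flats_def by blast
    have fP: "finite (Pow E)" using fin by simp
    define S where "S = {X. flat E N X \<and> G \<subseteq> X \<and> X \<notin> K2}"
    have "S \<subseteq> Pow E" unfolding S_def flat_def by blast
    hence fS: "finite S" using fP finite_subset by blast
    have GS: "G \<in> S" using GF G2 unfolding S_def by blast
    obtain X where X: "X \<in> S" "G \<subseteq> X" "\<forall>b\<in>S. X \<le> b \<longrightarrow> X = b"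
      using finite_has_maximal2[OF fS GS] by blast
    have XF: "flat E N X" "X \<notin> K2" using X(1) unfolding S_def by auto
    have X1: "X \<in> K1" using up1 G1 XF(1) X(2) by blast
    obtain F0 where F0: "F0 \<in> K2" using ne2 by blast
    have EF: "flat E N E" unfolding flat_def by blast
    have F0E: "F0 \<subseteq> E" using F0 K2 unfolding flats_def flat_def by blast
    have "E \<in> K2" using up2 F0 EF F0E by blast
    hence XE: "X \<noteq> E" using XF by blast
    have XsubE: "X \<subset> E" using XF(1) XE unfolding flat_def by blast
    define T where "T = {Y. flat E N Y \<and> X \<subset> Y}"
    have "T \<subseteq> Pow E" unfolding T_def flat_def by blast
    hence fT: "finite T" using fP finite_subset by blast
    have ET: "E \<in> T" using EF XsubE unfolding T_def by blast
    obtain Y where Y: "Y \<in> T" "\<forall>b\<in>T. b \<le> Y \<longrightarrow> Y = b"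
      using finite_has_minimal2[OF fT ET] by blast
    have YF: "flat E N Y" "X \<subset> Y" using Y(1) unfolding T_def by auto
    have "Y \<notin> S"
    proof
      assume "Y \<in> S"
      hence "X = Y" using X(3) YF(2) by blast
      thus False using YF(2) by blast
    qed
    hence Y2: "Y \<in> K2" using YF X(2) unfolding S_def by blast
    have cov: "covers E N Y X" unfolding covers_def
    proof (intro conjI)
      show "\<not> (\<exists>H. flat E N H \<and> X \<subset> H \<and> H \<subset> Y)"
      proof
        assume "\<exists>H. flat E N H \<and> X \<subset> H \<and> H \<subset> Y"
        then obtain H where H: "flat E N H" "X \<subset> H" "H \<subset> Y" by blast
        hence "H \<in> T" unfolding T_def by blast
        hence "Y = H" using Y(2) H(3) by blast
        thus False using H(3) by blast
      qed
    qed (use XF YF in auto)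
    have "X \<notin> elem_quotient_flats E N K2" unfolding elem_quotient_flats_def using XF(2) cov Y2 by blast
    moreover have "X \<in> elem_quotient_flats E N K1" unfolding elem_quotient_flats_def using X1 by blast
    ultimately show False using eq by simp
  qed
qed

lemma eqf_unique:
  assumes "finite E" "modular_cut E N K1" "modular_cut E N K2"
    and "elem_quotient_flats E N K1 = elem_quotient_flats E N K2"
  shows "K1 = K2"
proof -
  have mc1: "K1 \<noteq> {} \<and> K1 \<subseteq> flats E N \<and> (\<forall>F\<in>K1. \<forall>G. flat E N G \<and> F \<subseteq> G \<longrightarrow> G \<in> K1)"
    using assms(2) unfolding modular_cut_def by (elim conjE) (intro conjI; assumption)
  note m1 = conjunct1[OF mc1] conjunct1[OF conjunct2[OF mc1]] conjunct2[OF conjunct2[OF mc1]]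
  have mc2: "K2 \<noteq> {} \<and> K2 \<subseteq> flats E N \<and> (\<forall>F\<in>K2. \<forall>G. flat E N G \<and> F \<subseteq> G \<longrightarrow> G \<in> K2)"
    using assms(3) unfolding modular_cut_def by (elim conjE) (intro conjI; assumption)
  note m2 = conjunct1[OF mc2] conjunct1[OF conjunct2[OF mc2]] conjunct2[OF conjunct2[OF mc2]]
  have "K1 \<subseteq> K2" by (rule eqf_unique_aux[OF assms(1) m1(2) m2(2) m2(3) m2(1) m1(3) assms(4)])
  moreover have "K2 \<subseteq> K1" by (rule eqf_unique_aux[OF assms(1) m2(2) m1(2) m1(3) m1(1) m2(3) assms(4)[symmetric]])
  ultimately show ?thesis by blast
qed

lemma eqf_cong: "flats E N1 = flats E N2 \<Longrightarrow> elem_quotient_flats E N1 K = elem_quotient_flats E N2 K"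
proof -
  assume h: "flats E N1 = flats E N2"
  hence "\<And>X. flat E N1 X = flat E N2 X" unfolding flats_def by blast
  hence "\<And>G F. covers E N1 G F = covers E N2 G F" unfolding covers_def by simp
  thus ?thesis unfolding elem_quotient_flats_def using h by simp
qed

context quot begin

abbreviation R where "R i A \<equiv> min (rk M A) (rk M' A + i)"

lemma flat_hi_iff: "flat E (hi i) G \<longleftrightarrow> G \<subseteq> E \<and> (\<forall>x\<in>E-G. R i G < R i (insert x G))"
proof
  assume "flat E (hi i) G"
  hence G: "G \<subseteq> E" and h: "\<forall>x\<in>E-G. rk (hi i) G < rk (hi i) (insert x G)" unfolding flat_def by auto
  { fix x assume x: "x \<in> E - G"
    have "insert x G \<subseteq> E" using G x by blast
    note e1 = rk_hi[OF G, of i] and e2 = rk_hi[OF this, of i]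
    have "rk (hi i) G < rk (hi i) (insert x G)" using h x by blast
    hence "R i G < R i (insert x G)" unfolding e1 e2 . }
  thus "G \<subseteq> E \<and> (\<forall>x\<in>E-G. R i G < R i (insert x G))" using G by blast
next
  assume "G \<subseteq> E \<and> (\<forall>x\<in>E-G. R i G < R i (insert x G))"
  hence G: "G \<subseteq> E" and h: "\<forall>x\<in>E-G. R i G < R i (insert x G)" by auto
  { fix x assume x: "x \<in> E - G"
    have "insert x G \<subseteq> E" using G x by blast
    note e1 = rk_hi[OF G, of i] and e2 = rk_hi[OF this, of i]
    have "R i G < R i (insert x G)" using h x by blast
    hence "rk (hi i) G < rk (hi i) (insert x G)" unfolding e1 e2 . }
  thus "flat E (hi i) G" using G unfolding flat_def by blast
qed

lemma nu_ge: "int i \<le> nu G \<longleftrightarrow> rk M' G + i \<le> rk M G"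
  unfolding nullity_def by linarith

lemma hi_flat_M':
  assumes G: "flat E (hi i) G" and n: "int i \<le> nu G"
  shows "flat E M' G"
proof -
  have GE: "G \<subseteq> E" and h: "\<forall>x\<in>E-G. R i G < R i (insert x G)" using G flat_hi_iff by auto
  have n': "rk M' G + i \<le> rk M G" using n nu_ge by blast
  { fix x assume x: "x \<in> E - G"
    have le: "rk M' G \<le> rk M' (insert x G)" by (rule N'.rk_mono) auto
    have hx: "R i G < R i (insert x G)" using h x by blast
    { assume eq: "rk M' (insert x G) = rk M' G"
      have "R i (insert x G) \<le> rk M' (insert x G) + i" by (rule min.cobounded2)
      hence "R i (insert x G) \<le> rk M' G + i" using eq by simp
      moreover have "R i G = rk M' G + i" using n' by (rule min_absorb2)
      ultimately have False using hx by linarith }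
    hence "rk M' G < rk M' (insert x G)" using le by (metis le_neq_implies_less) }
  thus ?thesis using GE unfolding flat_def by blast
qed

lemma cyc_exists:
  assumes G: "flat E M' G"
  shows "\<exists>F\<in>cyc E M' M. F \<subseteq> G \<and> nu F = nu G"
proof -
  define S where "S = {F. flat E M' F \<and> F \<subseteq> G \<and> nu F = nu G}"
  have GE: "G \<subseteq> E" using G unfolding flat_def by blast
  have "S \<subseteq> Pow G" unfolding S_def by blast
  moreover have "finite (Pow G)" using GE N.finE finite_subset by (simp add: finite_subset)
  ultimately have fS: "finite S" using finite_subset by blast
  have GS: "G \<in> S" using G unfolding S_def by blast
  obtain F where F: "F \<in> S" "\<forall>b\<in>S. b \<le> F \<longrightarrow> F = b" using finite_has_minimal2[OF fS GS] by blast
  have FF: "flat E M' F" "F \<subseteq> G" "nu F = nu G" using F(1) unfolding S_def by auto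
  have "f_cyclic E M' M F" unfolding f_cyclic_def
  proof (intro conjI allI impI)
    show "flat E M' F" by (rule FF(1))
    fix F' assume h: "flat E M' F' \<and> F' \<subseteq> F \<and> nu F' = nu F"
    hence "F' \<in> S" unfolding S_def using FF by auto
    thus "F' = F" using F(2) h by blast
  qed
  thus ?thesis using FF unfolding cyc_def by blast
qed

lemma Kstar_eq:
  "{G \<in> flats E (hi i). \<exists>F\<in>cyc E M' M. F \<subseteq> G \<and> int i \<le> nu F} = {G \<in> flats E (hi i). int i \<le> nu G}"
proof (intro equalityI subsetI)
  fix G assume "G \<in> {G \<in> flats E (hi i). \<exists>F\<in>cyc E M' M. F \<subseteq> G \<and> int i \<le> nu F}"
  then obtain F where G: "flat E (hi i) G" and F: "F \<subseteq> G" "int i \<le> nu F" unfolding flats_def by blast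
  have "G \<subseteq> E" using G unfolding flat_def by blast
  hence "nu F \<le> nu G" using null_mono F(1) by blast
  thus "G \<in> {G \<in> flats E (hi i). int i \<le> nu G}" using G F unfolding flats_def by simp
next
  fix G assume "G \<in> {G \<in> flats E (hi i). int i \<le> nu G}"
  hence G: "flat E (hi i) G" and n: "int i \<le> nu G" unfolding flats_def by auto
  obtain F where "F \<in> cyc E M' M" "F \<subseteq> G" "nu F = nu G" using cyc_exists[OF hi_flat_M'[OF G n]] by blast
  thus "G \<in> {G \<in> flats E (hi i). \<exists>F\<in>cyc E M' M. F \<subseteq> G \<and> int i \<le> nu F}"
    using G n unfolding flats_def by auto
qed

end

context quot begin

lemma R_absorb1: "rk M A \<le> rk M' A + i \<Longrightarrow> R i A = rk M A" by (rule min_absorb1)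
lemma R_absorb2: "rk M' A + i \<le> rk M A \<Longrightarrow> R i A = rk M' A + i" by (rule min_absorb2)
lemma R_le1: "R i A \<le> rk M A" by (rule min.cobounded1)
lemma R_le2: "R i A \<le> rk M' A + i" by (rule min.cobounded2)
lemma lt_R: "c < R i A \<longleftrightarrow> c < rk M A \<and> c < rk M' A + i" by (rule min_less_iff_conj)

lemma Kstar_modcut:
  "modular_cut E (hi i) {G \<in> flats E (hi i). int i \<le> nu G}" if ic: "int i \<le> nu E"
proof -
  interpret H: matr E "hi i" by unfold_locales (rule hi_matroid)
  let ?K = "{G \<in> flats E (hi i). int i \<le> nu G}"
  have ne: "?K \<noteq> {}" using H.flat_E ic unfolding flats_def by blast
  have sub: "?K \<subseteq> flats E (hi i)" by blast
  have up: "\<forall>F\<in>?K. \<forall>G. flat E (hi i) G \<and> F \<subseteq> G \<longrightarrow> G \<in> ?K"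
  proof (intro ballI allI impI)
    fix F G assume F: "F \<in> ?K" and G: "flat E (hi i) G \<and> F \<subseteq> G"
    have "G \<subseteq> E" using G H.flat_sub by blast
    hence "nu F \<le> nu G" using null_mono G by blast
    thus "G \<in> ?K" using F G unfolding flats_def by simp
  qed
  have md: "\<forall>F1\<in>?K. \<forall>F2\<in>?K. rk (hi i) F1 + rk (hi i) F2 = rk (hi i) (F1 \<union> F2) + rk (hi i) (F1 \<inter> F2) \<longrightarrow> F1 \<inter> F2 \<in> ?K"
  proof (intro ballI impI)
    fix F1 F2 assume F1: "F1 \<in> ?K" and F2: "F2 \<in> ?K"
      and eq: "rk (hi i) F1 + rk (hi i) F2 = rk (hi i) (F1 \<union> F2) + rk (hi i) (F1 \<inter> F2)"
    have f1: "flat E (hi i) F1" "int i \<le> nu F1" using F1 unfolding flats_def by auto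
    have f2: "flat E (hi i) F2" "int i \<le> nu F2" using F2 unfolding flats_def by auto
    have E1: "F1 \<subseteq> E" using f1(1) H.flat_sub by blast
    have E2: "F2 \<subseteq> E" using f2(1) H.flat_sub by blast
    have Eu: "F1 \<union> F2 \<subseteq> E" using E1 E2 by blast
    have Ei: "F1 \<inter> F2 \<subseteq> E" using E1 E2 by blast
    have "rk M' F1 + i \<le> rk M F1" using f1(2) nu_ge by blast
    hence r1: "rk (hi i) F1 = rk M' F1 + i" unfolding rk_hi[OF E1] by (rule R_absorb2)
    have "rk M' F2 + i \<le> rk M F2" using f2(2) nu_ge by blast
    hence r2: "rk (hi i) F2 = rk M' F2 + i" unfolding rk_hi[OF E2] by (rule R_absorb2)
    have ru: "rk (hi i) (F1 \<union> F2) \<le> rk M' (F1 \<union> F2) + i" unfolding rk_hi[OF Eu] by (rule R_le2)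
    have ri: "rk (hi i) (F1 \<inter> F2) \<le> rk M (F1 \<inter> F2)" unfolding rk_hi[OF Ei] by (rule R_le1)
    have sm: "rk M' (F1 \<union> F2) + rk M' (F1 \<inter> F2) \<le> rk M' F1 + rk M' F2" by (rule N'.submod)
    have "rk M' (F1 \<inter> F2) + i \<le> rk M (F1 \<inter> F2)" using eq r1 r2 ru ri sm by linarith
    hence "int i \<le> nu (F1 \<inter> F2)" using nu_ge by blast
    moreover have "flat E (hi i) (F1 \<inter> F2)" using H.flat_inter f1(1) f2(1) by blast
    ultimately show "F1 \<inter> F2 \<in> ?K" unfolding flats_def by blast
  qed
  show ?thesis unfolding modular_cut_def
    by (intro conjI) (fact ne, fact sub, fact up, fact md)
qed

lemma Kstar_eqf:
  assumes ic: "int i \<le> nu E" and i1: "1 \<le> i"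
  shows "elem_quotient_flats E (hi i) {G \<in> flats E (hi i). int i \<le> nu G} = flats E (hi (i - 1))"
proof -
  interpret H: matr E "hi i" by unfold_locales (rule hi_matroid)
  define j where "j = i - 1"
  have ij: "i = Suc j" using i1 unfolding j_def by simp
  let ?K = "{G \<in> flats E (hi i). int i \<le> nu G}"
  have insfacts: "rk M (insert x A) \<le> Suc (rk M A)" "rk M A \<le> rk M (insert x A)"
     "rk M' (insert x A) \<le> Suc (rk M' A)" "rk M' A \<le> rk M' (insert x A)" for x A
    using N.rk_insert N'.rk_insert N.rk_mono N'.rk_mono by (auto intro: N.rk_mono N'.rk_mono)
  show ?thesis
  proof (intro equalityI subsetI)
    fix G assume G: "G \<in> elem_quotient_flats E (hi i) ?K"
    have GF: "flat E (hi i) G" using G unfolding elem_quotient_flats_def flats_def by blast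
    have GE: "G \<subseteq> E" using GF H.flat_sub by blast
    have hi_G: "\<forall>x\<in>E-G. R i G < R i (insert x G)" using GF flat_hi_iff by blast
    have "\<forall>x\<in>E-G. R j G < R j (insert x G)"
    proof (cases "int i \<le> nu G")
      case True
      have n': "rk M' G + i \<le> rk M G" using True nu_ge by blast
      have GM': "flat E M' G" using hi_flat_M'[OF GF True] .
      show ?thesis
      proof
        fix x assume x: "x \<in> E - G"
        have lt': "rk M' G < rk M' (insert x G)" using GM' x unfolding flat_def by blast
        hence "rk M' (insert x G) \<noteq> rk M' G" by simp
        hence "rk M (insert x G) \<noteq> rk M G" using q_step GE x by blast
        hence rins: "rk M (insert x G) = Suc (rk M G)" using insfacts[where x=x and A=G] by linarith
        have rj: "R j G = rk M' G + j" using n' ij by (intro R_absorb2) simp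
        show "R j G < R j (insert x G)" unfolding rj lt_R using rins n' lt' ij by simp
      qed
    next
      case False
      hence "\<not> (rk M' G + i \<le> rk M G)" using nu_ge by blast
      hence n': "rk M G \<le> rk M' G + j" using ij by linarith
      have GK: "G \<notin> ?K" using False by blast
      hence nc: "\<not> (\<exists>H\<in>?K. covers E (hi i) H G)" using G unfolding elem_quotient_flats_def by blast
      have rjG: "R j G = rk M G" using n' by (rule R_absorb1)
      have riG: "R i G = rk M G" using n' ij by (intro R_absorb1) simp
      show ?thesis
      proof
        fix x assume x: "x \<in> E - G"
        have hx: "R i G < R i (insert x G)" using hi_G x by blast
        hence a1: "rk M G < rk M (insert x G)" and a2: "rk M G < rk M' (insert x G) + i"
          unfolding riG lt_R by auto
        have rins: "rk M (insert x G) = Suc (rk M G)" using a1 insfacts[where x=x and A=G] by linarith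
        have insE: "insert x G \<subseteq> E" using x GE by blast
        have "rk M (insert x G) \<le> rk M' (insert x G) + j"
        proof (rule ccontr)
          assume "\<not> rk M (insert x G) \<le> rk M' (insert x G) + j"
          hence "rk M' (insert x G) + i \<le> rk M (insert x G)" using ij by simp
          hence nins: "int i \<le> nu (insert x G)" using nu_ge by blast
          define C where "C = H.cl (insert x G)"
          have CF: "flat E (hi i) C" unfolding C_def using H.flat_cl[OF insE] .
          have CE: "C \<subseteq> E" using CF H.flat_sub by blast
          have insC: "insert x G \<subseteq> C" unfolding C_def using H.cl_sup[OF insE] .
          have "nu (insert x G) \<le> nu C" using null_mono[OF CE insC] .
          hence CK: "C \<in> ?K" using CF nins unfolding flats_def by simp
          have rC: "rk (hi i) C = R i (insert x G)" unfolding C_def H.rk_cl[OF insE] rk_hi[OF insE] ..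
          have rG: "rk (hi i) G = R i G" using rk_hi[OF GE] .
          have "R i (insert x G) \<le> Suc (R i G)" using R_le1[where i=i and A="insert x G"] rins riG by simp
          have cov: "covers E (hi i) C G" unfolding covers_def
          proof (intro conjI)
            show "G \<subset> C" using insC x by blast
            show "\<not> (\<exists>Y. flat E (hi i) Y \<and> G \<subset> Y \<and> Y \<subset> C)"
            proof
              assume "\<exists>Y. flat E (hi i) Y \<and> G \<subset> Y \<and> Y \<subset> C"
              then obtain Y where Y: "flat E (hi i) Y" "G \<subset> Y" "Y \<subset> C" by blast
              have "rk (hi i) G < rk (hi i) Y" using H.flat_rk_less[OF GF Y(1) Y(2)] .
              moreover have "rk (hi i) Y < rk (hi i) C" using H.flat_rk_less[OF Y(1) CF Y(3)] .
              ultimately show False using rC rG \<open>R i (insert x G) \<le> Suc (R i G)\<close> by linarith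
            qed
          qed (use GF CF in auto)
          thus False using nc CK by blast
        qed
        hence "rk M G < rk M' (insert x G) + j" using rins by simp
        thus "R j G < R j (insert x G)" unfolding rjG lt_R using a1 by simp
      qed
    qed
    thus "G \<in> flats E (hi (i - 1))" using GE flat_hi_iff unfolding flats_def j_def by blast
  next
    fix G assume G: "G \<in> flats E (hi (i - 1))"
    have GE: "G \<subseteq> E" and hj: "\<forall>x\<in>E-G. R j G < R j (insert x G)"
      using G flat_hi_iff unfolding flats_def j_def by auto
    show "G \<in> elem_quotient_flats E (hi i) ?K"
    proof (cases "int i \<le> nu G")
      case True
      have n': "rk M' G + i \<le> rk M G" using True nu_ge by blast
      have rj: "R j G = rk M' G + j" using n' ij by (intro R_absorb2) simp
      have ri: "R i G = rk M' G + i" using n' by (rule R_absorb2)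
      have "\<forall>x\<in>E-G. R i G < R i (insert x G)"
      proof
        fix x assume x: "x \<in> E - G"
        have "rk M' G + j < R j (insert x G)" using hj x rj by simp
        hence "rk M' G < rk M' (insert x G)" unfolding lt_R by simp
        hence r1: "rk M' (insert x G) = Suc (rk M' G)" using insfacts[where x=x and A=G] by linarith
        hence "rk M' (insert x G) \<noteq> rk M' G" by simp
        hence "rk M (insert x G) \<noteq> rk M G" using q_step GE x by blast
        hence r2: "rk M (insert x G) = Suc (rk M G)" using insfacts[where x=x and A=G] by linarith
        show "R i G < R i (insert x G)" unfolding ri lt_R using r1 r2 n' by simp
      qed
      hence "flat E (hi i) G" using GE flat_hi_iff by blast
      hence "G \<in> ?K" using True unfolding flats_def by blast
      thus ?thesis unfolding elem_quotient_flats_def by blast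
    next
      case False
      hence "\<not> (rk M' G + i \<le> rk M G)" using nu_ge by blast
      hence n': "rk M G \<le> rk M' G + j" using ij by linarith
      have rjG: "R j G = rk M G" using n' by (rule R_absorb1)
      have riG: "R i G = rk M G" using n' ij by (intro R_absorb1) simp
      have facts: "rk M (insert x G) = Suc (rk M G) \<and> rk M (insert x G) \<le> rk M' (insert x G) + j"
        if x: "x \<in> E - G" for x
      proof -
        have "rk M G < R j (insert x G)" using hj x rjG by simp
        hence a1: "rk M G < rk M (insert x G)" and a2: "rk M G < rk M' (insert x G) + j"
          unfolding lt_R by auto
        have "rk M (insert x G) = Suc (rk M G)" using a1 insfacts[where x=x and A=G] by linarith
        thus ?thesis using a2 by simp
      qed
      have "\<forall>x\<in>E-G. R i G < R i (insert x G)"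
      proof
        fix x assume x: "x \<in> E - G"
        show "R i G < R i (insert x G)" unfolding riG lt_R using facts[OF x] ij by simp
      qed
      hence GF: "flat E (hi i) G" using GE flat_hi_iff by blast
      have "\<not> (\<exists>Hc\<in>?K. covers E (hi i) Hc G)"
      proof
        assume "\<exists>Hc\<in>?K. covers E (hi i) Hc G"
        then obtain Hc where HK: "Hc \<in> ?K" and cov: "covers E (hi i) Hc G" by blast
        have HF: "flat E (hi i) Hc" and nH: "int i \<le> nu Hc" using HK unfolding flats_def by auto
        have GH: "G \<subset> Hc" and nb: "\<not> (\<exists>Y. flat E (hi i) Y \<and> G \<subset> Y \<and> Y \<subset> Hc)"
          using cov unfolding covers_def by auto
        obtain x where x: "x \<in> Hc" "x \<notin> G" using GH by blast
        have HE: "Hc \<subseteq> E" using HF H.flat_sub by blast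
        have xE: "x \<in> E - G" using x HE by blast
        have insE: "insert x G \<subseteq> E" using xE GE by blast
        define C where "C = H.cl (insert x G)"
        have CF: "flat E (hi i) C" unfolding C_def using H.flat_cl[OF insE] .
        have insC: "insert x G \<subseteq> C" unfolding C_def using H.cl_sup[OF insE] .
        have "insert x G \<subseteq> Hc" using x GH by blast
        hence CH: "C \<subseteq> Hc" unfolding C_def using H.cl_min[OF HF] by blast
        have GC: "G \<subset> C" using insC x by blast
        have CeqH: "C = Hc"
        proof (rule ccontr)
          assume "C \<noteq> Hc"
          hence "C \<subset> Hc" using CH by blast
          thus False using nb CF GC by blast
        qed
        have rC: "rk (hi i) C = R i (insert x G)" unfolding C_def H.rk_cl[OF insE] rk_hi[OF insE] ..
        have "rk M' Hc + i \<le> rk M Hc" using nH nu_ge by blast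
        hence rH: "rk (hi i) Hc = rk M' Hc + i" unfolding rk_hi[OF HE] by (rule R_absorb2)
        have f: "rk M (insert x G) = Suc (rk M G)" "rk M (insert x G) \<le> rk M' (insert x G) + j"
          using facts[OF xE] by auto
        have "R i (insert x G) = rk M (insert x G)" using f(2) ij by (intro R_absorb1) simp
        moreover have "rk M' (insert x G) \<le> rk M' Hc" using \<open>insert x G \<subseteq> Hc\<close> by (rule N'.rk_mono)
        ultimately show False using rC rH CeqH f ij by simp
      qed
      thus ?thesis using GF unfolding elem_quotient_flats_def flats_def by blast
    qed
  qed
qed

end

context quot begin

lemma higgs_zero: "higgs E M' M 0 = M'"
  by (rule ext) (simp add: higgs_def)

lemma part1:
  assumes c: "nu E = int c" and i: "1 \<le> i" "i \<le> c"
  shows "(modular_cut E (higgs E M' M i) K \<and>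
          elem_quotient_flats E (higgs E M' M i) K = flats E (higgs E M' M (i - 1)))
         \<longleftrightarrow> K = {G \<in> flats E (higgs E M' M i). \<exists>F\<in>cyc E M' M. F \<subseteq> G \<and> nu F \<ge> int i}"
proof -
  have ic: "int i \<le> nu E" using c i by simp
  have ic': "int (i - 1) \<le> nu E" using c i by simp
  have h1: "higgs E M' M i = hi i" by (rule higgs_hi[OF ic])
  have h0: "higgs E M' M (i - 1) = hi (i - 1)" by (rule higgs_hi[OF ic'])
  have ks: "{G \<in> flats E (hi i). \<exists>F\<in>cyc E M' M. F \<subseteq> G \<and> nu F \<ge> int i} = {G \<in> flats E (hi i). int i \<le> nu G}"
    by (rule Kstar_eq)
  note mc = Kstar_modcut[OF ic] and ef = Kstar_eqf[OF ic i(1)]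
  show ?thesis unfolding h1 h0 ks
  proof
    assume a: "modular_cut E (hi i) K \<and> elem_quotient_flats E (hi i) K = flats E (hi (i - 1))"
    show "K = {G \<in> flats E (hi i). int i \<le> nu G}"
      by (rule eqf_unique[OF N.finE conjunct1[OF a] mc]) (use a ef in simp)
  next
    assume "K = {G \<in> flats E (hi i). int i \<le> nu G}"
    thus "modular_cut E (hi i) K \<and> elem_quotient_flats E (hi i) K = flats E (hi (i - 1))"
      using mc ef by simp
  qed
qed

lemma higgs_top:
  assumes c: "nu E = int c"
  shows "higgs E M' M c = M"
proof -
  have "higgs E M' M c = hi c" by (rule higgs_hi) (use c in simp)
  moreover have "hi c = M"
  proof
    fix X
    show "hi c X = M X"
    proof
      assume "hi c X" thus "M X" unfolding hi_def by blast
    next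
      assume MX: "M X"
      have "nu X \<le> nu E" using null_mono[OF _ N.ind_E[OF MX]] by blast
      hence "int (card X) - int (rk M' X) \<le> int c" using null_ind[OF MX] c by simp
      hence "card X \<le> rk M' X + c" by linarith
      thus "hi c X" using MX unfolding hi_def by blast
    qed
  qed
  ultimately show ?thesis by simp
qed

lemma cyc_top: "\<exists>F\<in>cyc E M' M. nu F = nu E"
  using cyc_exists[OF N'.flat_E] by blast

lemma cyc_le: "F \<in> cyc E M' M \<Longrightarrow> nu F \<le> nu E"
proof -
  assume "F \<in> cyc E M' M"
  hence "flat E M' F" unfolding cyc_def f_cyclic_def by blast
  hence "F \<subseteq> E" using N'.flat_sub by blast
  thus ?thesis using null_mono by blast
qed

end

theorem proposition3p23:
  fixes E :: "'a set" and M' M :: "'a set \<Rightarrow> bool" and c :: nat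
  assumes "quotient E M' M"
    and "nullity M' M E = int c"
  shows "(\<forall>i K. 1 \<le> i \<and> i \<le> c \<longrightarrow>
            ((modular_cut E (higgs E M' M i) K \<and>
              elem_quotient_flats E (higgs E M' M i) K = flats E (higgs E M' M (i - 1)))
             \<longleftrightarrow> K = {G \<in> flats E (higgs E M' M i).
                      \<exists>F\<in>cyc E M' M. F \<subseteq> G \<and> nullity M' M F \<ge> int i}))
       \<and> (\<forall>M''. quotient E M'' M \<and> cyc E M'' M = cyc E M' M \<and>
                (\<forall>F\<in>cyc E M' M. nullity M'' M F = nullity M' M F) \<longrightarrow> M'' = M')"
proof -
  interpret Q: quot E M' M by unfold_locales (rule assms(1))
  have P1: "\<forall>i K. 1 \<le> i \<and> i \<le> c \<longrightarrow>
            ((modular_cut E (higgs E M' M i) K \<and>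
              elem_quotient_flats E (higgs E M' M i) K = flats E (higgs E M' M (i - 1)))
             \<longleftrightarrow> K = {G \<in> flats E (higgs E M' M i).
                      \<exists>F\<in>cyc E M' M. F \<subseteq> G \<and> nullity M' M F \<ge> int i})"
  proof (intro allI impI)
    fix i K assume a: "1 \<le> i \<and> i \<le> c"
    show "(modular_cut E (higgs E M' M i) K \<and>
              elem_quotient_flats E (higgs E M' M i) K = flats E (higgs E M' M (i - 1)))
             \<longleftrightarrow> K = {G \<in> flats E (higgs E M' M i).
                      \<exists>F\<in>cyc E M' M. F \<subseteq> G \<and> nullity M' M F \<ge> int i}"
      by (rule Q.part1[OF assms(2) conjunct1[OF a] conjunct2[OF a]])
  qed
  have P2: "M'' = M'" if h: "quotient E M'' M" "cyc E M'' M = cyc E M' M"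
      "\<forall>F\<in>cyc E M' M. nullity M'' M F = nullity M' M F" for M''
  proof -
    interpret Q2: quot E M'' M by unfold_locales (rule h(1))
    obtain F0 where F0: "F0 \<in> cyc E M' M" "nullity M' M F0 = nullity M' M E" using Q.cyc_top by blast
    obtain F1 where F1: "F1 \<in> cyc E M'' M" "nullity M'' M F1 = nullity M'' M E" using Q2.cyc_top by blast
    have "nullity M'' M F0 \<le> nullity M'' M E" using Q2.cyc_le F0(1) h(2) by blast
    moreover have "nullity M'' M F0 = nullity M' M F0" using h(3) F0(1) by blast
    moreover have "nullity M' M F1 \<le> nullity M' M E" using Q.cyc_le F1(1) h(2) by blast
    moreover have "nullity M'' M F1 = nullity M' M F1" using h(3) F1(1) h(2) by blast
    ultimately have c2: "nullity M'' M E = int c" using F0 F1 assms(2) by linarith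
    have step: "flats E (higgs E M'' M (c - k)) = flats E (higgs E M' M (c - k))" if "k \<le> c" for k
      using that
    proof (induction k)
      case 0
      show ?case using Q.higgs_top[OF assms(2)] Q2.higgs_top[OF c2] by simp
    next
      case (Suc k)
      define i where "i = c - k"
      have i1: "1 \<le> i" "i \<le> c" using Suc.prems unfolding i_def by auto
      have im: "c - Suc k = i - 1" unfolding i_def by simp
      have IH: "flats E (higgs E M'' M i) = flats E (higgs E M' M i)" using Suc unfolding i_def by simp
      let ?K1 = "{G \<in> flats E (higgs E M' M i). \<exists>F\<in>cyc E M' M. F \<subseteq> G \<and> nullity M' M F \<ge> int i}"
      let ?K2 = "{G \<in> flats E (higgs E M'' M i). \<exists>F\<in>cyc E M'' M. F \<subseteq> G \<and> nullity M'' M F \<ge> int i}"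
      have "modular_cut E (higgs E M' M i) ?K1 \<and> elem_quotient_flats E (higgs E M' M i) ?K1 = flats E (higgs E M' M (i - 1))"
        by (rule iffD2[OF Q.part1[OF assms(2) i1, of ?K1] refl])
      hence e1: "elem_quotient_flats E (higgs E M' M i) ?K1 = flats E (higgs E M' M (i - 1))"
        by (rule conjunct2)
      have "modular_cut E (higgs E M'' M i) ?K2 \<and> elem_quotient_flats E (higgs E M'' M i) ?K2 = flats E (higgs E M'' M (i - 1))"
        by (rule iffD2[OF Q2.part1[OF c2 i1, of ?K2] refl])
      hence e2: "elem_quotient_flats E (higgs E M'' M i) ?K2 = flats E (higgs E M'' M (i - 1))"
        by (rule conjunct2)
      have h3: "\<And>F. F \<in> cyc E M' M \<Longrightarrow> nullity M'' M F = nullity M' M F" using h(3) by blast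
      have KK: "?K2 = ?K1"
      proof (rule set_eqI)
        fix G
        have "(\<exists>F\<in>cyc E M' M. F \<subseteq> G \<and> int i \<le> nullity M'' M F) \<longleftrightarrow> (\<exists>F\<in>cyc E M' M. F \<subseteq> G \<and> int i \<le> nullity M' M F)"
          by (rule bex_cong[OF refl]) (simp add: h3)
        thus "G \<in> ?K2 \<longleftrightarrow> G \<in> ?K1" unfolding IH h(2) by simp
      qed
      have "flats E (higgs E M'' M (i - 1)) = elem_quotient_flats E (higgs E M'' M i) ?K1"
        using e2 KK by simp
      also have "\<dots> = elem_quotient_flats E (higgs E M' M i) ?K1" by (rule eqf_cong[OF IH])
      also have "\<dots> = flats E (higgs E M' M (i - 1))" by (rule e1)
      finally show ?case unfolding im .
    qed
    have "flats E (higgs E M'' M 0) = flats E (higgs E M' M 0)" using step[of c] by simp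
    hence "flats E M'' = flats E M'" unfolding Q.higgs_zero Q2.higgs_zero .
    thus "M'' = M'" by (rule flats_eq_matroid[OF Q2.N'.mat Q.N'.mat])
  qed
  show ?thesis
  proof (intro conjI)
    show "\<forall>M''. quotient E M'' M \<and> cyc E M'' M = cyc E M' M \<and>
                (\<forall>F\<in>cyc E M' M. nullity M'' M F = nullity M' M F) \<longrightarrow> M'' = M'"
    proof (intro allI impI)
      fix M'' assume a: "quotient E M'' M \<and> cyc E M'' M = cyc E M' M \<and>
                (\<forall>F\<in>cyc E M' M. nullity M'' M F = nullity M' M F)"
      show "M'' = M'" by (rule P2[OF conjunct1[OF a] conjunct1[OF conjunct2[OF a]] conjunct2[OF conjunct2[OF a]]])
    qed
  qed (rule P1)
qed

end
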